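(* Let $\phi:\mathbb{R}^N\times\mathbb{R}^N\to\mathbb{R}$ be differentiable. Consider the problem of minimizing, over Lipschitz-in-$\mathbf{x}$ fields $\mathbf{u}:[0,T]\times\mathbb{R}^N\to\mathbb{R}^N$, the cost $\int_0^T\phi(\mathbf{x}(t),\mathbf{x}'(t))\,dt$ where $\mathbf{x}'(t)=\mathbf{u}(t,\mathbf{x}(t))$, $\mathbf{x}(0)=\mathbf{x}_0$, for every initial datum $\mathbf{x}_0\in\mathbb{R}^N$. If $\mathbf{u}$ is optimal (for all $\mathbf{x}_0$), then the solution $\mathbf{p}:[0,T]\times\mathbb{R}^N\to\mathbb{R}^N$ (row vector) of the linear transport system $\mathbf{p}_t+\nabla\mathbf{p}\,\mathbf{u}+\mathbf{p}\,\nabla\mathbf{u}=\nabla_{\mathbf{x}}[\phi(\mathbf{x},\mathbf{u}(t,\mathbf{x}))]$ in $[0,T]\times\mathbb{R}^N$, with $\mathbf{p}(T,\mathbf{x})=0$, coincides with $\phi_\xi(\mathbf{x},\mathbf{u}(t,\mathbf{x}))$ along trajectories, i.e. $\mathbf{p}(t,\mathbf{x})\equiv\phi_\xi(\mathbf{x},\mathbf{u}(t,\mathbf{x}))$.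
   Context: $\nabla$ denotes the Jacobian in the spatial variable $\mathbf{x}$; $\nabla_{\mathbf{x}}[\phi(\mathbf{x},\mathbf{u}(t,\mathbf{x}))]=\phi_{\mathbf{x}}(\mathbf{x},\mathbf{u})+\phi_\xi(\mathbf{x},\mathbf{u})\nabla\mathbf{u}$. *)

theory Defs
  imports "HOL-Analysis.Analysis"
begin

text \<open>Points of R^N are vectors of type real^'n ('n a finite index type, N = CARD('n)).
  Row vectors (p, phi_xi) are also represented as elements of real^'n, acting on
  column vectors by the inner product.\<close>

definition admissible_field :: "real \<Rightarrow> (real \<Rightarrow> real^'n \<Rightarrow> real^'n) \<Rightarrow> bool" where
  "admissible_field T v \<longleftrightarrow>
     continuous_on ({0..T} \<times> UNIV) (\<lambda>z. v (fst z) (snd z)) \<and>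
     (\<exists>L. \<forall>t\<in>{0..T}. L-lipschitz_on UNIV (v t))"

definition trajectory :: "real \<Rightarrow> (real \<Rightarrow> real^'n \<Rightarrow> real^'n) \<Rightarrow> real^'n \<Rightarrow> (real \<Rightarrow> real^'n) \<Rightarrow> bool" where
  "trajectory T v x0 x \<longleftrightarrow>
     x 0 = x0 \<and> (\<forall>t\<in>{0..T}. (x has_vector_derivative v t (x t)) (at t within {0..T}))"

definition cost :: "real \<Rightarrow> (real^'n \<Rightarrow> real^'n \<Rightarrow> real) \<Rightarrow> (real \<Rightarrow> real^'n \<Rightarrow> real^'n) \<Rightarrow> (real \<Rightarrow> real^'n) \<Rightarrow> real" where
  "cost T \<phi> v x = integral {0..T} (\<lambda>t. \<phi> (x t) (v t (x t)))"

definition optimal_field :: "real \<Rightarrow> (real^'n \<Rightarrow> real^'n \<Rightarrow> real) \<Rightarrow> (real \<Rightarrow> real^'n \<Rightarrow> real^'n) \<Rightarrow> bool" where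
  "optimal_field T \<phi> u \<longleftrightarrow> admissible_field T u \<and>
     (\<forall>x0 v y z. admissible_field T v \<longrightarrow> trajectory T u x0 y \<longrightarrow> trajectory T v x0 z \<longrightarrow>
        cost T \<phi> u y \<le> cost T \<phi> v z)"

text \<open>Row vector of partial derivatives phi_xi(x,xi), from the total derivative D of
  (x,xi) |-> phi x xi.\<close>
definition partial_xi :: "((real^'n) \<times> (real^'n) \<Rightarrow> ((real^'n) \<times> (real^'n)) \<Rightarrow>\<^sub>L real) \<Rightarrow> real^'n \<Rightarrow> real^'n \<Rightarrow> real^'n" where
  "partial_xi D x \<xi> = (\<chi> i. blinfun_apply (D (x, \<xi>)) (0, axis i 1))"

end

theory Submission
  imports Defs
begin


lemma picard_exists:
  fixes f :: "real \<Rightarrow> 'a::euclidean_space \<Rightarrow> 'a"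
  assumes ab: "a \<le> b"
    and cont: "continuous_on ({a..b} \<times> UNIV) (\<lambda>z. f (fst z) (snd z))"
    and lip: "\<And>t. t \<in> {a..b} \<Longrightarrow> L-lipschitz_on UNIV (f t)"
  shows "\<exists>X. X a = x0 \<and> (\<forall>t\<in>{a..b}. (X has_vector_derivative f t (X t)) (at t within {a..b}))"
proof -
  have L0: "0 \<le> L" using lip[of a] ab by (simp add: lipschitz_on_def)
  have lipd: "norm (f t x - f t y) \<le> L * norm (x - y)" if "t \<in> {a..b}" for t x y
    using lip[OF that] by (auto simp: lipschitz_on_def dist_norm)
  have contc: "continuous_on {a..b} (\<lambda>s. f s (Y s))" if "continuous_on {a..b} Y" for Y
  proof -
    have "continuous_on {a..b} (\<lambda>s. (s, Y s))" by (intro continuous_intros that)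
    from continuous_on_compose2[OF cont this] show ?thesis by auto
  qed
  define X where "X = rec_nat (\<lambda>t. x0) (\<lambda>k Xk t. x0 + integral {a..t} (\<lambda>s. f s (Xk s)))"
  have X0: "X 0 = (\<lambda>t. x0)" by (simp add: X_def)
  have XS: "X (Suc k) = (\<lambda>t. x0 + integral {a..t} (\<lambda>s. f s (X k s)))" for k by (simp add: X_def)
  have Xc: "continuous_on {a..b} (X k)" for k
  proof (induction k)
    case 0 then show ?case by (simp add: X0)
  next
    case (Suc k)
    show ?case unfolding XS
      by (intro continuous_intros indefinite_integral_continuous_1 integrable_continuous_real contc Suc)
  qed
  have intg: "(\<lambda>s. f s (X k s)) integrable_on {a..t}" if "t \<in> {a..b}" for k t
    by (rule integrable_continuous_real, rule continuous_on_subset[OF contc[OF Xc]]) (use that in auto)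
  obtain M0 where M0: "\<And>t. t \<in> {a..b} \<Longrightarrow> norm (X 1 t - X 0 t) \<le> M0"
  proof -
    have "compact ((\<lambda>t. X 1 t - X 0 t) ` {a..b})"
      by (intro compact_continuous_image continuous_intros Xc) simp
    then obtain B where "\<forall>y\<in>(\<lambda>t. X 1 t - X 0 t) ` {a..b}. norm y \<le> B"
      using compact_imp_bounded bounded_iff by metis
    then have "\<And>t. t\<in>{a..b} \<Longrightarrow> norm (X 1 t - X 0 t) \<le> B" by blast
    then show ?thesis by (rule that)
  qed
  have M0pos: "0 \<le> M0" using M0[of a] ab by (meson norm_ge_zero order_trans atLeastAtMost_iff order_refl)
  have key: "norm (X (Suc k) t - X k t) \<le> M0 * (L*(t-a))^k / fact k" if "t \<in> {a..b}" for k t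
    using that
  proof (induction k arbitrary: t)
    case 0 then show ?case using M0 by simp
  next
    case (Suc k)
    have sub: "{a..t} \<subseteq> {a..b}" using Suc.prems by auto
    have eq: "X (Suc (Suc k)) t - X (Suc k) t = integral {a..t} (\<lambda>s. f s (X (Suc k) s) - f s (X k s))"
      using fun_cong[OF XS[of "Suc k"], of t] fun_cong[OF XS[of k], of t]
        integral_diff[OF intg[OF Suc.prems] intg[OF Suc.prems], of "Suc k" k] by simp
    define F where "F s = M0 * (L*(s-a))^Suc k / fact (Suc k)" for s
    have Fd: "(F has_vector_derivative (L * (M0 * (L*(s-a))^k / fact k))) (at s within {a..t})" for s
    proof -
      have d1: "((\<lambda>s. L*(s-a)) has_real_derivative L) (at s within {a..t})"
        by (auto intro!: derivative_eq_intros)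
      have "(F has_real_derivative (M0 / fact (Suc k)) * ((1 + real k) * (L * (L*(s-a))^k))) (at s within {a..t})"
        unfolding F_def using DERIV_cmult[OF DERIV_power_Suc[OF d1, of k], of "M0 / fact (Suc k)"]
        by (simp add: field_simps)
      moreover have "(M0 / fact (Suc k)) * ((1 + real k) * (L * y^k)) = L * (M0 * y^k / fact k)" for y
      proof -
        have h0: "(0::real) < fact k" by simp
        have h1: "(1 + real k) \<noteq> 0" "fact k \<noteq> (0::real)" "fact k + fact k * real k \<noteq> (0::real)"
        proof -
          show "(1 + real k) \<noteq> 0" "fact k \<noteq> (0::real)" by auto
          have "0 \<le> fact k * real k" using h0 by simp
          then have "0 < fact k + fact k * real k" using h0 by linarith
          then show "fact k + fact k * real k \<noteq> (0::real)" by simp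
        qed
        have "fact (Suc k) = (1 + real k) * (fact k :: real)" by (simp add: fact_Suc)
        then show ?thesis using h1 by (simp add: field_simps)
      qed
      ultimately show ?thesis by (simp add: has_real_derivative_iff_has_vector_derivative mult.left_commute)
    qed
    have hi: "((\<lambda>s. L * (M0 * (L*(s-a))^k / fact k)) has_integral (F t - F a)) {a..t}"
      by (rule fundamental_theorem_of_calculus) (use Suc.prems Fd in auto)
    have "norm (X (Suc (Suc k)) t - X (Suc k) t) \<le> integral {a..t} (\<lambda>s. L * (M0 * (L*(s-a))^k / fact k))"
      unfolding eq
    proof (rule integral_norm_bound_integral)
      show "(\<lambda>s. f s (X (Suc k) s) - f s (X k s)) integrable_on {a..t}"
        by (intro integrable_diff intg Suc.prems)
      show "(\<lambda>s. L * (M0 * (L*(s-a))^k / fact k)) integrable_on {a..t}" using hi by blast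
      fix s assume s: "s \<in> {a..t}"
      then have sab: "s \<in> {a..b}" using sub by auto
      have "norm (f s (X (Suc k) s) - f s (X k s)) \<le> L * norm (X (Suc k) s - X k s)"
        by (rule lipd[OF sab])
      also have "\<dots> \<le> L * (M0 * (L*(s-a))^k / fact k)"
        by (rule mult_left_mono[OF Suc.IH[OF sab] L0])
      finally show "norm (f s (X (Suc k) s) - f s (X k s)) \<le> L * (M0 * (L*(s-a))^k / fact k)" .
    qed
    also have "\<dots> = F t - F a" by (rule integral_unique[OF hi])
    also have "\<dots> = M0 * (L*(t-a))^Suc k / fact (Suc k)" by (simp add: F_def)
    finally show ?case .
  qed

  define D where "D k t = X (Suc k) t - X k t" for k t
  define Mk where "Mk k = M0 * (L*(b-a))^k / fact k" for k
  have Dle: "norm (D k t) \<le> Mk k" if "t \<in> {a..b}" for k t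
  proof -
    have "norm (D k t) \<le> M0 * (L*(t-a))^k / fact k" using key[OF that] by (simp add: D_def)
    also have "\<dots> \<le> Mk k" unfolding Mk_def using that L0 M0pos
      by (intro divide_right_mono mult_left_mono power_mono mult_left_mono) auto
    finally show ?thesis .
  qed
  have summ: "summable Mk"
  proof -
    have "summable (\<lambda>k. M0 * (inverse (fact k) * (L*(b-a))^k))"
      by (intro summable_mult summable_exp)
    then show ?thesis unfolding Mk_def by (simp add: field_simps)
  qed
  have ul: "uniform_limit {a..b} (\<lambda>n t. \<Sum>i<n. D i t) (\<lambda>t. suminf (\<lambda>i. D i t)) sequentially"
    by (rule Weierstrass_m_test[OF Dle summ])
  have Xsum: "X n t = x0 + (\<Sum>i<n. D i t)" for n t
    by (induction n) (simp_all add: X0 D_def)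
  define Y where "Y t = x0 + suminf (\<lambda>i. D i t)" for t
  have ulX: "uniform_limit {a..b} X Y sequentially"
    using ul unfolding uniform_limit_iff Xsum Y_def by (simp add: dist_norm)
  have Yc: "continuous_on {a..b} Y"
    by (rule uniform_limit_theorem[OF _ ulX]) (auto intro: Xc always_eventually)
  have Yeq: "Y t = x0 + integral {a..t} (\<lambda>s. f s (Y s))" if t: "t \<in> {a..b}" for t
  proof -
    have sub: "{a..t} \<subseteq> {a..b}" using t by auto
    have intY: "(\<lambda>s. f s (Y s)) integrable_on {a..t}"
      by (rule integrable_continuous_real, rule continuous_on_subset[OF contc[OF Yc] sub])
    have l1: "(\<lambda>n. X (Suc n) t) \<longlonglongrightarrow> Y t"
    proof -
      have "(\<lambda>n. X n t) \<longlonglongrightarrow> Y t"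
        using tendsto_uniform_limitI[OF ulX t] .
      then show ?thesis by (rule LIMSEQ_Suc)
    qed
    have l2: "(\<lambda>n. X (Suc n) t) \<longlonglongrightarrow> x0 + integral {a..t} (\<lambda>s. f s (Y s))"
      unfolding XS
    proof (intro tendsto_add tendsto_const)
      show "(\<lambda>n. integral {a..t} (\<lambda>s. f s (X n s))) \<longlonglongrightarrow> integral {a..t} (\<lambda>s. f s (Y s))"
      proof (rule LIMSEQ_I)
        fix r :: real assume r: "0 < r"
        define e where "e = r / (L * (b - a) + 1)"
        have e: "0 < e" unfolding e_def using r L0 ab by (intro divide_pos_pos) (auto intro: add_nonneg_pos)
        from ulX[unfolded uniform_limit_iff, rule_format, OF e]
        obtain N where N: "\<And>n. n \<ge> N \<Longrightarrow> \<forall>s\<in>{a..b}. dist (X n s) (Y s) < e"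
          unfolding eventually_sequentially by blast
        show "\<exists>N. \<forall>n\<ge>N. norm (integral {a..t} (\<lambda>s. f s (X n s)) - integral {a..t} (\<lambda>s. f s (Y s))) < r"
        proof (intro exI allI impI)
          fix n assume n: "n \<ge> N"
          have "norm (integral {a..t} (\<lambda>s. f s (X n s)) - integral {a..t} (\<lambda>s. f s (Y s)))
              = norm (integral {a..t} (\<lambda>s. f s (X n s) - f s (Y s)))"
            using intg[OF t] intY by (simp add: integral_diff)
          also have "\<dots> \<le> integral {a..t} (\<lambda>s. L * e)"
          proof (rule integral_norm_bound_integral)
            show "(\<lambda>s. f s (X n s) - f s (Y s)) integrable_on {a..t}"
              using intg[OF t] intY by (rule integrable_diff)
            show "(\<lambda>s. L * e) integrable_on {a..t}" by (rule integrable_const_ivl)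
            fix s assume "s \<in> {a..t}"
            then have s: "s \<in> {a..b}" using sub by auto
            have "norm (f s (X n s) - f s (Y s)) \<le> L * norm (X n s - Y s)" by (rule lipd[OF s])
            also have "\<dots> \<le> L * e" using N[OF n] s L0 by (intro mult_left_mono) (auto simp: dist_norm intro: less_imp_le)
            finally show "norm (f s (X n s) - f s (Y s)) \<le> L * e" .
          qed
          also have "\<dots> = (t - a) * (L * e)" using t by simp
          also have "\<dots> \<le> (b - a) * (L * e)" using t L0 e by (intro mult_right_mono) auto
          also have "\<dots> < r"
          proof -
            have "(b - a) * (L * e) = r * (L * (b - a)) / (L * (b - a) + 1)"
              unfolding e_def by (simp add: field_simps)
            also have "\<dots> < r"
            proof -
              have gen: "r * c / (c + 1) < r" if c: "0 \<le> c" for c :: real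
              proof -
                have "0 < c + 1" using c by simp
                then show ?thesis using r by (simp add: pos_divide_less_eq)
              qed
              show ?thesis by (rule gen) (use L0 ab in simp)
            qed
            finally show ?thesis .
          qed
          finally show "norm (integral {a..t} (\<lambda>s. f s (X n s)) - integral {a..t} (\<lambda>s. f s (Y s))) < r" .
        qed
      qed
    qed
    show ?thesis using LIMSEQ_unique[OF l1 l2] .
  qed
  show ?thesis
  proof (intro exI conjI ballI)
    show "Y a = x0" using Yeq[of a] ab by simp
    fix t assume t: "t \<in> {a..b}"
    have hd: "((\<lambda>t. x0 + integral {a..t} (\<lambda>s. f s (Y s))) has_vector_derivative f t (Y t)) (at t within {a..b})"
      using integral_has_vector_derivative[OF contc[OF Yc] t]
      by (intro derivative_eq_intros) auto
    show "(Y has_vector_derivative f t (Y t)) (at t within {a..b})"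
      by (rule has_vector_derivative_transform[OF t _ hd]) (simp add: Yeq)
  qed
qed


lemma glue_deriv:
  fixes X :: "real \<Rightarrow> 'a::real_normed_vector"
  assumes ac: "a \<le> c" and cb: "c \<le> b" and t: "t \<in> {a..b}"
    and d1: "t \<in> {a..c} \<Longrightarrow> (X has_vector_derivative v) (at t within {a..c})"
    and d2: "t \<in> {c..b} \<Longrightarrow> (X has_vector_derivative v) (at t within {c..b})"
  shows "(X has_vector_derivative v) (at t within {a..b})"
proof (cases t c rule: linorder_cases)
  case less
  have "at t within {a..b} = at t within {a..c}"
    by (rule at_within_nhd[of _ "{..<c}"]) (use less cb in auto)
  then show ?thesis using d1 less t by auto
next
  case greater
  have "at t within {a..b} = at t within {c..b}"
    by (rule at_within_nhd[of _ "{c<..}"]) (use greater ac in auto)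
  then show ?thesis using d2 greater t by auto
next
  case equal
  have u: "{a..b} = {a..c} \<union> {c..b}" using ac cb by auto
  have A: "(X has_vector_derivative v) (at t within {a..c})" using d1 equal ac by auto
  have B: "(X has_vector_derivative v) (at t within {c..b})" using d2 equal cb by auto
  show ?thesis using A B unfolding u has_vector_derivative_def has_derivative_at_within
    by (simp add: at_within_union filterlim_sup)
qed

lemma traj_through:
  fixes u :: "real \<Rightarrow> real^'n \<Rightarrow> real^'n"
  assumes adm: "admissible_field T u" and t0: "t0 \<in> {0..T}"
  shows "\<exists>x0 X. trajectory T u x0 X \<and> X t0 = x"
proof -
  from adm obtain L where cont: "continuous_on ({0..T} \<times> UNIV) (\<lambda>z. u (fst z) (snd z))"
    and lip: "\<And>t. t \<in> {0..T} \<Longrightarrow> L-lipschitz_on UNIV (u t)"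
    unfolding admissible_field_def by blast
  define g where "g s y = - u (t0 - s) y" for s y
  have gc: "continuous_on ({0..t0} \<times> UNIV) (\<lambda>z. g (fst z) (snd z))"
  proof -
    have "continuous_on ({0..t0} \<times> UNIV) (\<lambda>z. (t0 - fst z, snd z))" by (intro continuous_intros)
    moreover have "(\<lambda>z. (t0 - fst z, snd z)) ` ({0..t0} \<times> UNIV) \<subseteq> {0..T} \<times> UNIV" using t0 by auto
    ultimately have "continuous_on ({0..t0} \<times> UNIV) (\<lambda>z. u (fst (t0 - fst z, snd z)) (snd (t0 - fst z, snd z)))"
      by (rule continuous_on_compose2[OF cont])
    then show ?thesis unfolding g_def by (auto intro: continuous_intros)
  qed
  have glip: "L-lipschitz_on UNIV (g s)" if "s \<in> {0..t0}" for s
  proof -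
    have "t0 - s \<in> {0..T}" using that t0 by auto
    from lip[OF this] show ?thesis unfolding g_def lipschitz_on_def by (simp add: dist_minus)
  qed
  obtain Yb where Yb0: "Yb 0 = x" and Ybd: "\<And>s. s \<in> {0..t0} \<Longrightarrow> (Yb has_vector_derivative g s (Yb s)) (at s within {0..t0})"
    using picard_exists[OF _ gc glip, of x] t0 by auto
  have fc: "continuous_on ({t0..T} \<times> UNIV) (\<lambda>z. u (fst z) (snd z))"
    by (rule continuous_on_subset[OF cont]) (use t0 in auto)
  obtain Zf where Zf0: "Zf t0 = x" and Zfd: "\<And>s. s \<in> {t0..T} \<Longrightarrow> (Zf has_vector_derivative u s (Zf s)) (at s within {t0..T})"
    using picard_exists[OF _ fc lip, of x] t0 by auto
  define X where "X t = (if t \<le> t0 then Yb (t0 - t) else Zf t)" for t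
  have "(X has_vector_derivative u t (X t)) (at t within {0..T})" if t: "t \<in> {0..T}" for t
  proof (rule glue_deriv[of 0 t0 T])
    show "0 \<le> t0" "t0 \<le> T" "t \<in> {0..T}" using t0 t by auto
    assume t1: "t \<in> {0..t0}"
    have "((Yb \<circ> (\<lambda>t. t0 - t)) has_vector_derivative (-1) *\<^sub>R g (t0 - t) (Yb (t0 - t))) (at t within {0..t0})"
    proof (rule vector_diff_chain_within)
      show "((\<lambda>t. t0 - t) has_vector_derivative -1) (at t within {0..t0})"
        by (auto intro!: derivative_eq_intros)
      have im: "(\<lambda>t. t0 - t) ` {0..t0} = {0..t0}"
        by (auto simp: image_iff intro!: bexI[where x="t0 - _"])
      show "(Yb has_vector_derivative g (t0 - t) (Yb (t0 - t))) (at (t0 - t) within (\<lambda>t. t0 - t) ` {0..t0})"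
        unfolding im by (rule Ybd) (use t1 in auto)
    qed
    moreover have "(-1) *\<^sub>R g (t0 - t) (Yb (t0 - t)) = u t (X t)" using t1 by (simp add: X_def g_def)
    ultimately have hd: "((Yb \<circ> (\<lambda>t. t0 - t)) has_vector_derivative u t (X t)) (at t within {0..t0})" by simp
    show "(X has_vector_derivative u t (X t)) (at t within {0..t0})"
      by (rule has_vector_derivative_transform[OF t1 _ hd]) (auto simp: X_def)
  next
    assume t2: "t \<in> {t0..T}"
    show "(X has_vector_derivative u t (X t)) (at t within {t0..T})"
    proof -
      have xt: "X t = Zf t" using t2 Yb0 Zf0 by (auto simp: X_def)
      show ?thesis unfolding xt
        by (rule has_vector_derivative_transform[OF t2 _ Zfd[OF t2]]) (use Yb0 Zf0 in \<open>auto simp: X_def\<close>)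
    qed
  qed
  then have "trajectory T u (Yb t0) X" unfolding trajectory_def X_def using t0 by auto
  moreover have "X t0 = x" using Yb0 by (simp add: X_def)
  ultimately show ?thesis by blast
qed


lemma lip_deriv_bound:
  fixes f :: "'a::real_normed_vector \<Rightarrow> 'b::real_normed_vector"
  assumes lip: "L-lipschitz_on UNIV f" and d: "(f has_derivative f') (at x)"
  shows "norm (f' v) \<le> L * norm v"
proof (cases "v = 0")
  case True
  have "linear f'" using has_derivative_linear[OF d] .
  then show ?thesis using True by (simp add: linear_0)
next
  case False
  have lin: "linear f'" using has_derivative_linear[OF d] .
  have nv: "0 < norm v" using False by simp
  show ?thesis
  proof (rule field_le_epsilon)
    fix e :: real assume e: "0 < e"
    from d[unfolded has_derivative_at_alt] e nv obtain dd where dd: "0 < dd"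
      and H: "\<And>y. norm (y - x) < dd \<Longrightarrow> norm (f y - f x - f' (y - x)) \<le> (e / norm v) * norm (y - x)"
      by (metis divide_pos_pos)
    define s where "s = dd / (2 * norm v)"
    have s: "0 < s" unfolding s_def using dd nv by simp
    have ny: "norm ((x + s *\<^sub>R v) - x) = s * norm v" using s by simp
    have "s * norm v < dd" unfolding s_def using dd nv by (simp add: field_simps)
    then have lt: "norm ((x + s *\<^sub>R v) - x) < dd" unfolding ny .
    have eq: "(x + s *\<^sub>R v) - x = s *\<^sub>R v" by simp
    have H1: "norm (f (x + s *\<^sub>R v) - f x - s *\<^sub>R f' v) \<le> (e / norm v) * (s * norm v)"
      using H[OF lt] unfolding ny unfolding eq linear_scale[OF lin] .
    have H2: "norm (f (x + s *\<^sub>R v) - f x) \<le> L * (s * norm v)"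
      using lip unfolding lipschitz_on_def dist_norm using ny s by (metis UNIV_I)
    have "norm (s *\<^sub>R f' v) \<le> norm (f (x + s *\<^sub>R v) - f x) + norm (f (x + s *\<^sub>R v) - f x - s *\<^sub>R f' v)"
      by (metis norm_triangle_ineq4 diff_diff_eq2 diff_zero norm_minus_commute add.commute
          norm_diff_ineq order_trans norm_triangle_sub)
    also have "\<dots> \<le> L * (s * norm v) + (e / norm v) * (s * norm v)" using H1 H2 by simp
    also have "\<dots> = s * (L * norm v + e)" using nv by (simp add: field_simps)
    finally have "s * norm (f' v) \<le> s * (L * norm v + e)" using s by simp
    then show "norm (f' v) \<le> L * norm v + e" using s by simp
  qed
qed

lemma blin_split:
  fixes B :: "((real^'n) \<times> (real^'n)) \<Rightarrow>\<^sub>L real"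
  shows "blinfun_apply B (v, w) = (\<Sum>j\<in>UNIV. v$j * blinfun_apply B (axis j 1, 0))
          + (\<Sum>i\<in>UNIV. w$i * blinfun_apply B (0, axis i 1))"
proof -
  have "(v, w) = (\<Sum>j\<in>UNIV. v$j *\<^sub>R (axis j 1, 0)) + (\<Sum>i\<in>UNIV. w$i *\<^sub>R (0, axis i 1))"
  proof -
    have v: "v = (\<Sum>j\<in>UNIV. v$j *\<^sub>R axis j 1)" using basis_expansion[of v] by (simp add: scalar_mult_eq_scaleR)
    have w: "w = (\<Sum>j\<in>UNIV. w$j *\<^sub>R axis j 1)" using basis_expansion[of w] by (simp add: scalar_mult_eq_scaleR)
    show ?thesis by (simp add: prod_eq_iff fst_sum snd_sum) (metis v w)
  qed
  then have "blinfun_apply B (v, w) = blinfun_apply B ((\<Sum>j\<in>UNIV. v$j *\<^sub>R (axis j 1, 0)) + (\<Sum>i\<in>UNIV. w$i *\<^sub>R (0, axis i 1)))"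
    by simp
  also have "\<dots> = (\<Sum>j\<in>UNIV. v$j * blinfun_apply B (axis j 1, 0)) + (\<Sum>i\<in>UNIV. w$i * blinfun_apply B (0, axis i 1))"
    by (simp only: blinfun.add_right blinfun.sum_right blinfun.scaleR_right) simp
  finally show ?thesis .
qed



theorem mainTheorem6:
  fixes \<phi> :: "real^'n \<Rightarrow> real^'n \<Rightarrow> real"
    and D\<phi> :: "(real^'n) \<times> (real^'n) \<Rightarrow> ((real^'n) \<times> (real^'n)) \<Rightarrow>\<^sub>L real"
    and u :: "real \<Rightarrow> real^'n \<Rightarrow> real^'n"
    and Du :: "real \<Rightarrow> real^'n \<Rightarrow> real^'n \<Rightarrow> real^'n"
    and p :: "real \<Rightarrow> real^'n \<Rightarrow> real^'n"
    and Dp :: "real \<Rightarrow> real^'n \<Rightarrow> real \<times> (real^'n) \<Rightarrow> real^'n"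
    and T :: real
  assumes T_pos: "0 < T"
    and phi_deriv: "\<And>z. ((\<lambda>w. \<phi> (fst w) (snd w)) has_derivative blinfun_apply (D\<phi> z)) (at z)"
    and phi_C1: "continuous_on UNIV D\<phi>"
    and u_opt: "optimal_field T \<phi> u"
    and u_deriv: "\<And>t x. t \<in> {0..T} \<Longrightarrow> (u t has_derivative Du t x) (at x)"
    and p_deriv: "\<And>t x. t \<in> {0..T} \<Longrightarrow>
        ((\<lambda>w. p (fst w) (snd w)) has_derivative Dp t x) (at (t, x) within {0..T} \<times> UNIV)"
    and p_pde: "\<And>t x j. t \<in> {0..T} \<Longrightarrow>
        Dp t x (1, 0) $ j + Dp t x (0, u t x) $ j + p t x \<bullet> Du t x (axis j 1)
          = blinfun_apply (D\<phi> (x, u t x)) (axis j 1, Du t x (axis j 1))"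
    and p_final: "\<And>x. p T x = 0"
  shows "\<forall>t\<in>{0..T}. \<forall>x. p t x = partial_xi D\<phi> x (u t x)"
proof (intro ballI allI)
  fix t0 x assume t0: "t0 \<in> {0..T}"
  have adm: "admissible_field T u" using u_opt by (simp add: optimal_field_def)
  obtain L where ucont: "continuous_on ({0..T} \<times> UNIV) (\<lambda>z. u (fst z) (snd z))"
    and ulip: "\<And>t. t \<in> {0..T} \<Longrightarrow> L-lipschitz_on UNIV (u t)"
    using adm unfolding admissible_field_def by blast
  have L0: "0 \<le> L" using ulip[of 0] T_pos by (simp add: lipschitz_on_def)
  obtain x0 X where tr: "trajectory T u x0 X" and Xt0: "X t0 = x"
    using traj_through[OF adm t0] by blast
  have X0: "X 0 = x0" and Xd: "\<And>t. t \<in> {0..T} \<Longrightarrow> (X has_vector_derivative u t (X t)) (at t within {0..T})"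
    using tr unfolding trajectory_def by auto
  have Xc: "continuous_on {0..T} X"
    using Xd has_vector_derivative_continuous continuous_on_eq_continuous_within by blast
  define U where "U t = u t (X t)" for t
  have Uc: "continuous_on {0..T} U"
  proof -
    have "continuous_on {0..T} (\<lambda>t. (t, X t))" by (intro continuous_intros Xc)
    from continuous_on_compose2[OF ucont this] show ?thesis by (auto simp: U_def)
  qed
  define W where "W t = (X t, U t)" for t
  have Wc: "continuous_on {0..T} W" unfolding W_def by (intro continuous_intros Xc Uc)
  have DWc: "continuous_on {0..T} (\<lambda>t. D\<phi> (W t))"
    by (rule continuous_on_compose2[OF phi_C1 Wc]) auto
  define aa where "aa t = (\<chi> j. blinfun_apply (D\<phi> (W t)) (axis j 1, 0))" for t
  define q where "q t = partial_xi D\<phi> (X t) (U t)" for t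
  have q_alt: "q t = (\<chi> i. blinfun_apply (D\<phi> (W t)) (0, axis i 1))" for t
    by (simp add: q_def partial_xi_def W_def)
  have aac: "continuous_on {0..T} aa" unfolding aa_def by (intro continuous_intros DWc)
  have qc: "continuous_on {0..T} q" unfolding q_alt by (intro continuous_intros DWc)
  have split: "blinfun_apply (D\<phi> (W t)) (v, w) = aa t \<bullet> v + q t \<bullet> w" for t v w
    using blin_split[of "D\<phi> (W t)" v w] by (simp add: aa_def q_alt inner_vec_def mult.commute)

  have phic: "continuous_on UNIV (\<lambda>w. \<phi> (fst w) (snd w))"
    using phi_deriv has_derivative_continuous continuous_at_imp_continuous_on by blast
  have EL: "integral {0..T} (\<lambda>t. aa t \<bullet> integral {0..t} h + q t \<bullet> h t) = 0"
    if hc: "continuous_on {0..T} h" for h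
  proof -
    define g where "g t = integral {0..t} h" for t
    have gd: "(g has_vector_derivative h t) (at t within {0..T})" if "t \<in> {0..T}" for t
      unfolding g_def by (rule integral_has_vector_derivative[OF hc that])
    have gc: "continuous_on {0..T} g"
      unfolding g_def by (intro indefinite_integral_continuous_1 integrable_continuous_real hc)
    have g0: "g 0 = 0" by (simp add: g_def)
    define J where "J e = integral {0..T} (\<lambda>t. \<phi> (X t + e *\<^sub>R g t) (U t + e *\<^sub>R h t))" for e
    have Jmin: "J 0 \<le> J e" for e
    proof -
      define v where "v t y = u t (y - e *\<^sub>R g t) + e *\<^sub>R h t" for t y
      define Z where "Z t = X t + e *\<^sub>R g t" for t
      have vadm: "admissible_field T v"
        unfolding admissible_field_def
      proof (intro conjI exI ballI)
        have gfc: "continuous_on ({0..T} \<times> UNIV) (\<lambda>z::real \<times> (real^'n). g (fst z))"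
          by (rule continuous_on_compose2[OF gc continuous_on_fst[OF continuous_on_id]]) auto
        have hfc: "continuous_on ({0..T} \<times> UNIV) (\<lambda>z::real \<times> (real^'n). h (fst z))"
          by (rule continuous_on_compose2[OF hc continuous_on_fst[OF continuous_on_id]]) auto
        have "continuous_on ({0..T} \<times> UNIV) (\<lambda>z::real \<times> (real^'n). (fst z, snd z - e *\<^sub>R g (fst z)))"
          by (intro continuous_intros gfc)
        from continuous_on_compose2[OF ucont this]
        have "continuous_on ({0..T} \<times> UNIV) (\<lambda>z::real \<times> (real^'n). u (fst z) (snd z - e *\<^sub>R g (fst z)))"
          by force
        then show "continuous_on ({0..T} \<times> UNIV) (\<lambda>z. v (fst z) (snd z))"
          unfolding v_def by (intro continuous_intros hfc)
        fix t assume t: "t \<in> {0..T}"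
        show "L-lipschitz_on UNIV (v t)"
          using ulip[OF t] unfolding lipschitz_on_def v_def
          by (auto simp: dist_norm) (metis (no_types, lifting) UNIV_I diff_diff_eq2 diff_add_cancel
              add_diff_cancel_right' dist_norm)
      qed
      have Ztr: "trajectory T v x0 Z"
        unfolding trajectory_def
      proof (intro conjI ballI)
        show "Z 0 = x0" by (simp add: Z_def g0 X0)
        fix t assume t: "t \<in> {0..T}"
        have "(Z has_vector_derivative (u t (X t) + e *\<^sub>R h t)) (at t within {0..T})"
          unfolding Z_def using Xd[OF t] gd[OF t] by (auto intro!: derivative_eq_intros)
        then show "(Z has_vector_derivative v t (Z t)) (at t within {0..T})"
          by (simp add: v_def Z_def)
      qed
      have tru: "trajectory T u x0 X" by (rule tr)
      have "cost T \<phi> u X \<le> cost T \<phi> v Z"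
        using u_opt vadm tru Ztr unfolding optimal_field_def by blast
      moreover have "cost T \<phi> u X = J 0" by (simp add: cost_def J_def U_def)
      moreover have "cost T \<phi> v Z = J e" by (simp add: cost_def J_def U_def v_def Z_def)
      ultimately show ?thesis by simp
    qed
    define fx where "fx e t = blinfun_apply (D\<phi> (X t + e *\<^sub>R g t, U t + e *\<^sub>R h t)) (g t, h t)" for e t
    have Jd: "(J has_field_derivative integral (cbox 0 T) (fx 0)) (at 0 within UNIV)"
      unfolding J_def box_real(2)[symmetric]
    proof (rule leibniz_rule_field_derivative)
      fix e t assume "e \<in> (UNIV::real set)" "t \<in> cbox 0 T"
      have c: "((\<lambda>e. (X t + e *\<^sub>R g t, U t + e *\<^sub>R h t)) has_derivative (\<lambda>d. (d *\<^sub>R g t, d *\<^sub>R h t))) (at e within UNIV)"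
        by (auto intro!: derivative_eq_intros)
      have "((\<lambda>e. \<phi> (fst (X t + e *\<^sub>R g t, U t + e *\<^sub>R h t)) (snd (X t + e *\<^sub>R g t, U t + e *\<^sub>R h t)))
          has_derivative (\<lambda>d. blinfun_apply (D\<phi> (X t + e *\<^sub>R g t, U t + e *\<^sub>R h t)) (d *\<^sub>R g t, d *\<^sub>R h t))) (at e within UNIV)"
        by (rule has_derivative_compose[OF c phi_deriv])
      moreover have "(\<lambda>d. blinfun_apply (D\<phi> (X t + e *\<^sub>R g t, U t + e *\<^sub>R h t)) (d *\<^sub>R g t, d *\<^sub>R h t)) = (*) (fx e t)"
      proof
        fix d :: real
        have "(d *\<^sub>R g t, d *\<^sub>R h t) = d *\<^sub>R (g t, h t)" by simp
        then show "blinfun_apply (D\<phi> (X t + e *\<^sub>R g t, U t + e *\<^sub>R h t)) (d *\<^sub>R g t, d *\<^sub>R h t) = fx e t * d"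
          unfolding fx_def by (simp only: blinfun.scaleR_right) simp
      qed
      ultimately show "((\<lambda>e. \<phi> (X t + e *\<^sub>R g t) (U t + e *\<^sub>R h t)) has_field_derivative fx e t) (at e within UNIV)"
        by (simp add: has_field_derivative_def)
    next
      fix e :: real assume "e \<in> UNIV"
      have "continuous_on {0..T} (\<lambda>t. (X t + e *\<^sub>R g t, U t + e *\<^sub>R h t))"
        by (intro continuous_intros Xc gc Uc hc)
      from continuous_on_compose2[OF phic this]
      have "continuous_on {0..T} (\<lambda>t. \<phi> (X t + e *\<^sub>R g t) (U t + e *\<^sub>R h t))" by simp
      then show "(\<lambda>t. \<phi> (X t + e *\<^sub>R g t) (U t + e *\<^sub>R h t)) integrable_on cbox 0 T"
        by (simp add: integrable_continuous_real)
    next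
      have Xs: "continuous_on (UNIV \<times> {0..T}) (\<lambda>z::real\<times>real. X (snd z))"
        by (rule continuous_on_compose2[OF Xc continuous_on_snd[OF continuous_on_id]]) auto
      have gs: "continuous_on (UNIV \<times> {0..T}) (\<lambda>z::real\<times>real. g (snd z))"
        by (rule continuous_on_compose2[OF gc continuous_on_snd[OF continuous_on_id]]) auto
      have Us: "continuous_on (UNIV \<times> {0..T}) (\<lambda>z::real\<times>real. U (snd z))"
        by (rule continuous_on_compose2[OF Uc continuous_on_snd[OF continuous_on_id]]) auto
      have hs: "continuous_on (UNIV \<times> {0..T}) (\<lambda>z::real\<times>real. h (snd z))"
        by (rule continuous_on_compose2[OF hc continuous_on_snd[OF continuous_on_id]]) auto
      have "continuous_on (UNIV \<times> {0..T}) (\<lambda>z::real\<times>real. (X (snd z) + fst z *\<^sub>R g (snd z), U (snd z) + fst z *\<^sub>R h (snd z)))"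
        by (intro continuous_intros Xs gs Us hs)
      from continuous_on_compose2[OF phi_C1 this]
      have "continuous_on (UNIV \<times> {0..T}) (\<lambda>z::real\<times>real. D\<phi> (X (snd z) + fst z *\<^sub>R g (snd z), U (snd z) + fst z *\<^sub>R h (snd z)))"
        by simp
      then have "continuous_on (UNIV \<times> {0..T}) (\<lambda>z::real\<times>real. fx (fst z) (snd z))"
        unfolding fx_def by (intro continuous_intros gs hs)
      then show "continuous_on (UNIV \<times> cbox 0 T) (\<lambda>(e, t). fx e t)"
        by (simp add: case_prod_beta')
    qed (auto)
    have Jd': "(J has_real_derivative integral {0..T} (fx 0)) (at 0)" using Jd by simp
    have "integral {0..T} (fx 0) = 0"
      by (rule DERIV_local_min[OF Jd' zero_less_one]) (auto intro: Jmin)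
    moreover have "fx 0 = (\<lambda>t. aa t \<bullet> g t + q t \<bullet> h t)"
      unfolding fx_def using split by (simp add: W_def)
    ultimately show ?thesis by (simp add: g_def)
  qed
  define A where "A t = integral {0..T} aa - integral {0..t} aa" for t
  have Ad: "(A has_vector_derivative - aa t) (at t within {0..T})" if t: "t \<in> {0..T}" for t
    unfolding A_def using integral_has_vector_derivative[OF aac t] by (auto intro!: derivative_eq_intros)
  have Ac: "continuous_on {0..T} A"
    unfolding A_def by (intro continuous_intros indefinite_integral_continuous_1 integrable_continuous_real aac)
  have AT: "A T = 0" by (simp add: A_def)
  define h where "h t = q t + A t" for t
  have hc: "continuous_on {0..T} h" unfolding h_def by (intro continuous_intros qc Ac)
  define g where "g t = integral {0..t} h" for t
  have gd: "(g has_vector_derivative h t) (at t within {0..T})" if "t \<in> {0..T}" for t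
    unfolding g_def by (rule integral_has_vector_derivative[OF hc that])
  have gc: "continuous_on {0..T} g"
    unfolding g_def by (intro indefinite_integral_continuous_1 integrable_continuous_real hc)
  have g0: "g 0 = 0" by (simp add: g_def)
  have FT: "((\<lambda>t. A t \<bullet> h t - aa t \<bullet> g t) has_integral (A T \<bullet> g T - A 0 \<bullet> g 0)) {0..T}"
  proof (rule fundamental_theorem_of_calculus)
    show "0 \<le> T" using T_pos by simp
    fix t assume t: "t \<in> {0..T}"
    have "((\<lambda>t. A t \<bullet> g t) has_derivative (\<lambda>d. A t \<bullet> (d *\<^sub>R h t) + (d *\<^sub>R (- aa t)) \<bullet> g t)) (at t within {0..T})"
      using Ad[OF t] gd[OF t] unfolding has_vector_derivative_def by (rule has_derivative_inner)
    then show "((\<lambda>t. A t \<bullet> g t) has_vector_derivative (A t \<bullet> h t - aa t \<bullet> g t)) (at t within {0..T})"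
      unfolding has_vector_derivative_def by (rule has_derivative_eq_rhs) (simp add: fun_eq_iff algebra_simps)
  qed
  have iah: "(\<lambda>t. A t \<bullet> h t) integrable_on {0..T}"
    by (intro integrable_continuous_real continuous_intros Ac hc)
  have iag: "(\<lambda>t. aa t \<bullet> g t) integrable_on {0..T}"
    by (intro integrable_continuous_real continuous_intros aac gc)
  have iqh: "(\<lambda>t. q t \<bullet> h t) integrable_on {0..T}"
    by (intro integrable_continuous_real continuous_intros qc hc)
  have e1: "integral {0..T} (\<lambda>t. A t \<bullet> h t) - integral {0..T} (\<lambda>t. aa t \<bullet> g t) = 0"
    using integral_unique[OF FT] AT g0 by (simp add: integral_diff[OF iah iag])
  have e2: "integral {0..T} (\<lambda>t. aa t \<bullet> g t) + integral {0..T} (\<lambda>t. q t \<bullet> h t) = 0"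
    using EL[OF hc] integral_add[OF iag iqh] unfolding g_def by simp
  have hh: "integral {0..T} (\<lambda>t. h t \<bullet> h t) = 0"
  proof -
    have "(\<lambda>t. h t \<bullet> h t) = (\<lambda>t. q t \<bullet> h t + A t \<bullet> h t)" by (simp add: h_def fun_eq_iff inner_add_left)
    then have "integral {0..T} (\<lambda>t. h t \<bullet> h t) = integral {0..T} (\<lambda>t. q t \<bullet> h t) + integral {0..T} (\<lambda>t. A t \<bullet> h t)"
      by (simp add: integral_add[OF iqh iah])
    then show ?thesis using e1 e2 by simp
  qed
  have hz: "h t = 0" if t: "t \<in> {0..T}" for t
  proof -
    have ih: "(\<lambda>t. h t \<bullet> h t) integrable_on {0..T}"
      by (intro integrable_continuous_real continuous_intros hc)
    have "h t \<bullet> h t = 0"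
    proof (rule has_integral_0_cbox_imp_0[of 0 T "\<lambda>t. h t \<bullet> h t"])
      show "continuous_on (cbox 0 T) (\<lambda>t. h t \<bullet> h t)" by (simp, intro continuous_intros hc)
      show "((\<lambda>t. h t \<bullet> h t) has_integral 0) (cbox 0 T)" using ih hh by (simp add: has_integral_integral)
      show "box 0 T \<noteq> {}" using T_pos by simp
      show "t \<in> cbox 0 T" using t by simp
    qed auto
    then show ?thesis by simp
  qed
  have qA: "q t = - A t" if "t \<in> {0..T}" for t using hz[OF that] by (simp add: h_def eq_neg_iff_add_eq_0)
  have qd: "(q has_vector_derivative aa t) (at t within {0..T})" if t: "t \<in> {0..T}" for t
  proof -
    have "((\<lambda>t. - A t) has_vector_derivative - (- aa t)) (at t within {0..T})"
      by (intro derivative_intros Ad[OF t])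
    then have hd: "((\<lambda>t. - A t) has_vector_derivative aa t) (at t within {0..T})" by simp
    show ?thesis by (rule has_vector_derivative_transform[OF t _ hd]) (simp add: qA)
  qed
  have qT: "q T = 0" using qA[of T] AT T_pos by simp
  define P where "P t = p t (X t)" for t
  have Pd: "(P has_vector_derivative Dp t (X t) (1, U t)) (at t within {0..T})" if t: "t \<in> {0..T}" for t
  proof -
    have c: "((\<lambda>s. (s, X s)) has_vector_derivative (1, U t)) (at t within {0..T})"
      using Xd[OF t] unfolding U_def by (auto intro!: derivative_eq_intros)
    have pd: "((\<lambda>w. p (fst w) (snd w)) has_derivative Dp t (X t)) (at (t, X t) within (\<lambda>s. (s, X s)) ` {0..T})"
      by (rule has_derivative_subset[OF p_deriv[OF t]]) auto
    from vector_derivative_diff_chain_within[OF c pd] show ?thesis by (simp add: o_def P_def[abs_def])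
  qed
  define R where "R t = q t - P t" for t
  define R' where "R' t = aa t - Dp t (X t) (1, U t)" for t
  have Rd: "(R has_vector_derivative R' t) (at t within {0..T})" if t: "t \<in> {0..T}" for t
    unfolding R_def R'_def by (intro derivative_intros qd[OF t] Pd[OF t])
  have Rcomp: "R' t $ j = - (R t \<bullet> Du t (X t) (axis j 1))" if t: "t \<in> {0..T}" for t j
  proof -
    have lin: "linear (Dp t (X t))" using has_derivative_linear[OF p_deriv[OF t]] .
    have "Dp t (X t) (1, U t) = Dp t (X t) (1, 0) + Dp t (X t) (0, U t)"
      using linear_add[OF lin, of "(1, 0)" "(0, U t)"] by simp
    moreover have "Dp t (X t) (1, 0) $ j + Dp t (X t) (0, U t) $ j + P t \<bullet> Du t (X t) (axis j 1)
        = aa t $ j + q t \<bullet> Du t (X t) (axis j 1)"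
      using p_pde[OF t, of "X t" j] split[of t "axis j 1" "Du t (X t) (axis j 1)"]
      by (simp add: U_def P_def W_def inner_axis)
    ultimately show ?thesis by (simp add: R'_def R_def inner_diff_left algebra_simps)
  qed
  have RR: "R t \<bullet> R' t = - (R t \<bullet> Du t (X t) (R t))" if t: "t \<in> {0..T}" for t
  proof -
    have lin: "linear (Du t (X t))" using has_derivative_linear[OF u_deriv[OF t]] .
    have "R t \<bullet> R' t = (\<Sum>j\<in>UNIV. R t $ j * R' t $ j)" by (simp add: inner_vec_def)
    also have "\<dots> = - (\<Sum>j\<in>UNIV. R t $ j * (R t \<bullet> Du t (X t) (axis j 1)))"
      by (simp add: Rcomp[OF t] sum_negf)
    also have "\<dots> = - (R t \<bullet> (\<Sum>j\<in>UNIV. R t $ j *\<^sub>R Du t (X t) (axis j 1)))"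
      by (simp add: inner_sum_right)
    also have "(\<Sum>j\<in>UNIV. R t $ j *\<^sub>R Du t (X t) (axis j 1)) = Du t (X t) (\<Sum>j\<in>UNIV. R t $ j *\<^sub>R axis j 1)"
      by (simp add: linear_sum[OF lin] linear_scale[OF lin])
    also have "(\<Sum>j\<in>UNIV. R t $ j *\<^sub>R axis j 1) = R t"
      using basis_expansion[of "R t"] by (simp add: scalar_mult_eq_scaleR)
    finally show ?thesis .
  qed
  have bound: "R t \<bullet> Du t (X t) (R t) \<le> L * (R t \<bullet> R t)" if t: "t \<in> {0..T}" for t
  proof -
    have "R t \<bullet> Du t (X t) (R t) \<le> norm (R t) * norm (Du t (X t) (R t))"
      using Cauchy_Schwarz_ineq2[of "R t" "Du t (X t) (R t)"] by linarith
    also have "\<dots> \<le> norm (R t) * (L * norm (R t))"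
      by (intro mult_left_mono lip_deriv_bound[OF ulip[OF t] u_deriv[OF t]]) simp
    also have "\<dots> = L * (R t \<bullet> R t)" by (simp add: dot_square_norm power2_eq_square)
    finally show ?thesis .
  qed
  define E where "E t = exp (2 * L * t) * (R t \<bullet> R t)" for t
  define E' where "E' t = exp (2 * L * t) * (2 * L) * (R t \<bullet> R t) + exp (2 * L * t) * (2 * (R t \<bullet> R' t))" for t
  have Ed: "(E has_real_derivative E' t) (at t within {0..T})" if t: "t \<in> {0..T}" for t
  proof -
    have "((\<lambda>t. R t \<bullet> R t) has_derivative (\<lambda>d. R t \<bullet> (d *\<^sub>R R' t) + (d *\<^sub>R R' t) \<bullet> R t)) (at t within {0..T})"
      using Rd[OF t] Rd[OF t] unfolding has_vector_derivative_def by (rule has_derivative_inner)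
    then have d1: "((\<lambda>t. R t \<bullet> R t) has_real_derivative (2 * (R t \<bullet> R' t))) (at t within {0..T})"
      unfolding has_field_derivative_def
      by (rule has_derivative_eq_rhs) (simp add: fun_eq_iff inner_commute algebra_simps)
    show ?thesis unfolding E_def E'_def
      by (auto intro!: derivative_eq_intros d1)
  qed
  have E'nn: "0 \<le> E' t" if t: "t \<in> {0..T}" for t
  proof -
    have "0 \<le> exp (2 * L * t) * (2 * (L * (R t \<bullet> R t) - R t \<bullet> Du t (X t) (R t)))"
      using bound[OF t] by simp
    then show ?thesis unfolding E'_def RR[OF t] by (simp add: algebra_simps)
  qed
  have Ecto: "continuous_on {t0..T} E"
  proof -
    have "continuous_on {0..T} E"
      using Ed DERIV_continuous continuous_on_eq_continuous_within by blast
    then show ?thesis by (rule continuous_on_subset) (use t0 in auto)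
  qed
  have "E t0 \<le> E T"
  proof (rule DERIV_nonneg_imp_increasing_open[of t0 T E])
    show "t0 \<le> T" using t0 by simp
    fix y assume y: "t0 < y" "y < T"
    then have yT: "y \<in> {0..T}" using t0 by auto
    have "at y within {0..T} = at y" using y t0 by (intro at_within_Icc_at) auto
    then show "\<exists>d. (E has_real_derivative d) (at y) \<and> 0 \<le> d"
      using Ed[OF yT] E'nn[OF yT] by auto
  qed (rule Ecto)
  moreover have "E T = 0" unfolding E_def R_def P_def using qT p_final by simp
  ultimately have "R t0 \<bullet> R t0 \<le> 0" unfolding E_def by (simp add: mult_le_0_iff)
  then have "R t0 \<bullet> R t0 = 0" using inner_ge_zero[of "R t0"] by linarith
  then have "R t0 = 0" by simp
  then show "p t0 x = partial_xi D\<phi> x (u t0 x)" unfolding R_def P_def q_def U_def Xt0 by simp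
qed
end
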